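(* Let $X$ be a complex Banach space and $\Gamma\subset\mathcal{B}(X)$ such that $TS\in\Gamma$ for all $T,S\in\Gamma$. Let $\lambda:\Gamma\to\mathbb{T}$, $T\mapsto\lambda_T$, satisfy $\lambda_{TS}=\lambda_T\lambda_S$ for all $T,S\in\Gamma$, where $\mathbb{T}=\{\alpha\in\mathbb{C}:|\alpha|=1\}$. Then $\Gamma$ is recurrent if and only if $\Gamma_1=\{\lambda_TT:T\in\Gamma\}$ is recurrent.
   Context: $\mathcal{B}(X)$ denotes the algebra of bounded linear operators on $X$. A set $\Gamma\subset\mathcal{B}(X)$ is called recurrent if for every nonempty open subset $U$ of $X$ there exists $T\in\Gamma$ with $T(U)\cap U\neq\emptyset$. *)

theory Defs
  imports "HOL-Analysis.Analysis"
begin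

text \<open>Isabelle/HOL's distribution has no type class of complex vector spaces, so a complex
Banach space is modelled as a real Banach space (type class banach) together with a complex
scalar multiplication sm that extends the real one and is compatible with the norm.\<close>
definition complex_banach_scalar :: "(complex \<Rightarrow> 'a::banach \<Rightarrow> 'a) \<Rightarrow> bool" where
  "complex_banach_scalar sm \<longleftrightarrow>
     (\<forall>a x y. sm a (x + y) = sm a x + sm a y) \<and>
     (\<forall>a b x. sm (a + b) x = sm a x + sm b x) \<and>
     (\<forall>a b x. sm a (sm b x) = sm (a * b) x) \<and>
     (\<forall>r x. sm (complex_of_real r) x = r *\<^sub>R x) \<and>
     (\<forall>a x. norm (sm a x) = cmod a * norm x)"

definition bounded_complex_operator ::
    "(complex \<Rightarrow> 'a::banach \<Rightarrow> 'a) \<Rightarrow> ('a \<Rightarrow> 'a) \<Rightarrow> bool" where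
  "bounded_complex_operator sm T \<longleftrightarrow> bounded_linear T \<and> (\<forall>c x. T (sm c x) = sm c (T x))"

definition recurrent_set :: "('a::topological_space \<Rightarrow> 'a) set \<Rightarrow> bool" where
  "recurrent_set \<Gamma> \<longleftrightarrow> (\<forall>U. open U \<and> U \<noteq> {} \<longrightarrow> (\<exists>T\<in>\<Gamma>. T ` U \<inter> U \<noteq> {}))"

end

theory Submission
  imports Defs
begin

lemma sep_bound:
  assumes e: "(\<epsilon>::real) > 0"
  shows "\<exists>N. \<forall>Z. finite Z \<and> Z \<subseteq> sphere (0::complex) 1 \<and>
     (\<forall>z\<in>Z. \<forall>w\<in>Z. z \<noteq> w \<longrightarrow> \<epsilon> \<le> cmod (z - w)) \<longrightarrow> card Z \<le> N"
proof -
  have "seq_compact (sphere (0::complex) 1)"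
    by (simp add: compact_imp_seq_compact)
  then obtain k where k: "finite k" "k \<subseteq> sphere (0::complex) 1"
      "sphere 0 1 \<subseteq> (\<Union>x\<in>k. ball x (\<epsilon>/2))"
    using seq_compact_imp_totally_bounded[of "sphere (0::complex) 1"] e
    by (meson half_gt_zero)
  show ?thesis
  proof (intro exI allI impI)
    fix Z :: "complex set"
    assume Z: "finite Z \<and> Z \<subseteq> sphere 0 1 \<and> (\<forall>z\<in>Z. \<forall>w\<in>Z. z \<noteq> w \<longrightarrow> \<epsilon> \<le> cmod (z - w))"
    define g where "g z = (SOME c. c \<in> k \<and> z \<in> ball c (\<epsilon>/2))" for z
    have g: "g z \<in> k \<and> z \<in> ball (g z) (\<epsilon>/2)" if "z \<in> Z" for z
    proof -
      have "\<exists>c. c \<in> k \<and> z \<in> ball c (\<epsilon>/2)" using that Z k(3) by blast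
      then show ?thesis unfolding g_def by (rule someI_ex)
    qed
    have "inj_on g Z"
    proof (rule inj_onI)
      fix z w assume zw: "z \<in> Z" "w \<in> Z" "g z = g w"
      show "z = w"
      proof (rule ccontr)
        assume "z \<noteq> w"
        then have 1: "\<epsilon> \<le> cmod (z - w)" using Z zw by blast
        have 2: "dist (g z) z < \<epsilon>/2" "dist (g z) w < \<epsilon>/2"
          using g[OF zw(1)] g[OF zw(2)] zw(3) by auto
        have 3: "dist z w \<le> dist (g z) z + dist (g z) w"
          by (metis dist_commute dist_triangle)
        have "dist z w < \<epsilon>" using 2 3 by linarith
        then show False using 1 by (simp add: dist_norm)
      qed
    qed
    moreover have "g ` Z \<subseteq> k" using g by blast
    ultimately show "card Z \<le> card k"
      using card_inj_on_le k(1) by blast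
  qed
qed

lemma key:
  fixes f :: "'b \<Rightarrow> ('a::metric_space \<Rightarrow> 'a)" and lam :: "'b \<Rightarrow> complex"
    and G :: "'b set" and comp :: "'b \<Rightarrow> 'b \<Rightarrow> 'b"
  assumes cont: "\<forall>T\<in>G. continuous_on UNIV (f T)"
    and cl: "\<forall>T\<in>G. \<forall>S\<in>G. comp T S \<in> G"
    and fc: "\<forall>T\<in>G. \<forall>S\<in>G. f (comp T S) = f T \<circ> f S"
    and lc: "\<forall>T\<in>G. \<forall>S\<in>G. lam (comp T S) = lam T * lam S"
    and ln: "\<forall>T\<in>G. cmod (lam T) = 1"
    and rec: "recurrent_set (f ` G)"
    and e: "\<epsilon> > 0"
    and V: "open V" "V \<noteq> {}"
  shows "\<exists>T\<in>G. \<exists>x\<in>V. f T x \<in> V \<and> cmod (lam T - 1) < \<epsilon>"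
proof (rule ccontr)
  assume nc: "\<not> ?thesis"
  define good where "good V \<longleftrightarrow> (\<exists>T\<in>G. \<exists>x\<in>V. f T x \<in> V \<and> cmod (lam T - 1) < \<epsilon>)" for V
  have claim: "\<forall>V. open V \<and> V \<noteq> {} \<longrightarrow> good V \<or> (\<exists>W Z. open W \<and> W \<noteq> {} \<and> W \<subseteq> V \<and>
      finite Z \<and> card Z = n \<and> Z \<subseteq> sphere 0 1 \<and>
      (\<forall>z\<in>Z. \<forall>w\<in>Z. z \<noteq> w \<longrightarrow> \<epsilon> \<le> cmod (z - w)) \<and>
      (\<forall>z\<in>Z. \<exists>T\<in>G. lam T = z \<and> f T ` W \<subseteq> V))" for n
  proof (induction n)
    case 0
    show ?case
    proof (intro allI impI disjI2)
      fix U :: "'a set" assume "open U \<and> U \<noteq> {}"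
      then show "\<exists>W Z. open W \<and> W \<noteq> {} \<and> W \<subseteq> U \<and>
      finite Z \<and> card Z = 0 \<and> Z \<subseteq> sphere 0 1 \<and>
      (\<forall>z\<in>Z. \<forall>w\<in>Z. z \<noteq> w \<longrightarrow> \<epsilon> \<le> cmod (z - w)) \<and>
      (\<forall>z\<in>Z. \<exists>T\<in>G. lam T = z \<and> f T ` W \<subseteq> U)"
        by (intro exI[of _ U] exI[of _ "{}"]) auto
    qed
  next
    case (Suc n)
    show ?case
    proof (intro allI impI)
      fix V :: "'a set" assume V: "open V \<and> V \<noteq> {}"
      show "good V \<or> (\<exists>W Z. open W \<and> W \<noteq> {} \<and> W \<subseteq> V \<and>
      finite Z \<and> card Z = Suc n \<and> Z \<subseteq> sphere 0 1 \<and>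
      (\<forall>z\<in>Z. \<forall>w\<in>Z. z \<noteq> w \<longrightarrow> \<epsilon> \<le> cmod (z - w)) \<and>
      (\<forall>z\<in>Z. \<exists>T\<in>G. lam T = z \<and> f T ` W \<subseteq> V))"
      proof (cases "good V")
        case True then show ?thesis by blast
      next
        case False
        obtain T1 where T1: "T1 \<in> G" "f T1 ` V \<inter> V \<noteq> {}"
          using rec V unfolding recurrent_set_def by blast
        define V1 where "V1 = V \<inter> f T1 -` V"
        have oV1: "open V1" unfolding V1_def
          using V cont T1(1) continuous_on_open_vimage[of UNIV "f T1"] by auto
        have nV1: "V1 \<noteq> {}" unfolding V1_def using T1(2) by blast
        have ngV1: "\<not> good V1"
          using False unfolding good_def V1_def by blast
        obtain W Z where WZ: "open W" "W \<noteq> {}" "W \<subseteq> V1" "finite Z" "card Z = n"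
          "Z \<subseteq> sphere 0 1" "\<forall>z\<in>Z. \<forall>w\<in>Z. z \<noteq> w \<longrightarrow> \<epsilon> \<le> cmod (z - w)"
          "\<forall>z\<in>Z. \<exists>T\<in>G. lam T = z \<and> f T ` W \<subseteq> V1"
          using Suc.IH[rule_format, OF conjI[OF oV1 nV1]] ngV1 by (elim disjE exE conjE) blast+
        define Z' where "Z' = insert (lam T1) ((\<lambda>z. lam T1 * z) ` Z)"
        have l1: "cmod (lam T1) = 1" using ln T1 by blast
        then have l10: "lam T1 \<noteq> 0" by (metis norm_zero zero_neq_one)
        have far1: "\<epsilon> \<le> cmod (z - 1)" if "z \<in> Z" for z
        proof (rule ccontr)
          assume na: "\<not> ?thesis"
          have "\<exists>T\<in>G. lam T = z \<and> f T ` W \<subseteq> V1" using WZ(8) that by (rule bspec)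
          then obtain T where T0: "T \<in> G" "lam T = z \<and> f T ` W \<subseteq> V1" by (rule bexE)
          then have T: "T \<in> G" "lam T = z" "f T ` W \<subseteq> V1" by simp_all
          obtain x where x: "x \<in> W" using WZ(2) by (meson ex_in_conv)
          have x1: "x \<in> V" using x WZ(3) unfolding V1_def by blast
          have x2: "f T x \<in> V" using x T(3) unfolding V1_def by blast
          have "cmod (lam T - 1) < \<epsilon>" using T(2) na by simp
          then have "good V" unfolding good_def using T(1) x1 x2 by blast
          then show False using False by blast
        qed
        have notin: "lam T1 \<notin> (\<lambda>z. lam T1 * z) ` Z"
        proof
          assume "lam T1 \<in> (\<lambda>z. lam T1 * z) ` Z"
          then obtain z where "z \<in> Z" "lam T1 = lam T1 * z" by blast
          then have "z = 1" using l10 by simp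
          then show False using far1[OF \<open>z \<in> Z\<close>] e by simp
        qed
        have inj: "inj_on (\<lambda>z. lam T1 * z) Z" using l10 by (simp add: inj_on_def)
        have "card Z' = Suc n" unfolding Z'_def using notin inj WZ(4,5)
          by (simp add: card_image)
        moreover have "finite Z'" unfolding Z'_def using WZ(4) by simp
        moreover have "Z' \<subseteq> sphere 0 1" unfolding Z'_def using WZ(6) l1
          by (auto simp: norm_mult)
        moreover have "\<forall>z\<in>Z'. \<forall>w\<in>Z'. z \<noteq> w \<longrightarrow> \<epsilon> \<le> cmod (z - w)"
        proof (intro ballI impI)
          fix z w assume zw: "z \<in> Z'" "w \<in> Z'" "z \<noteq> w"
          have m: "cmod (lam T1 * a - lam T1 * b) = cmod (a - b)" for a b
            proof -
            have "lam T1 * a - lam T1 * b = lam T1 * (a - b)" by (simp add: right_diff_distrib)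
            then show ?thesis by (simp add: norm_mult l1)
          qed
          have m1: "cmod (lam T1 * a - lam T1) = cmod (a - 1)" for a
            using m[of a 1] by simp
          show "\<epsilon> \<le> cmod (z - w)"
            using zw unfolding Z'_def
            apply (elim insertE imageE)
            subgoal by simp
            subgoal for b using far1[of b] m1[of b] by (simp add: norm_minus_commute)
            subgoal for a using far1[of a] m1[of a] by simp
            subgoal for a b using WZ(7) m[of a b] by auto
            done
        qed
        moreover have "\<forall>z\<in>Z'. \<exists>T\<in>G. lam T = z \<and> f T ` W \<subseteq> V"
        proof
          fix z assume "z \<in> Z'"
          then consider "z = lam T1" | a where "a \<in> Z" "z = lam T1 * a"
            unfolding Z'_def by blast
          then show "\<exists>T\<in>G. lam T = z \<and> f T ` W \<subseteq> V"
          proof cases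
            case 1
            then show ?thesis using T1(1) WZ(3) unfolding V1_def by blast
          next
            case 2
            have "\<exists>T\<in>G. lam T = a \<and> f T ` W \<subseteq> V1" using WZ(8) 2(1) by (rule bspec)
            then obtain T where T0: "T \<in> G" "lam T = a \<and> f T ` W \<subseteq> V1" by (rule bexE)
            then have T: "T \<in> G" "lam T = a" "f T ` W \<subseteq> V1" by simp_all
            have "comp T1 T \<in> G" using cl T1(1) T(1) by blast
            moreover have "lam (comp T1 T) = z" using lc T1(1) T 2 by simp
            moreover have "f (comp T1 T) ` W \<subseteq> V"
            proof
              fix y assume "y \<in> f (comp T1 T) ` W"
              then obtain x where x: "x \<in> W" "y = f (comp T1 T) x" by blast
              have "f T x \<in> V1" using x(1) T(3) by blast
              then have "f T1 (f T x) \<in> V" unfolding V1_def by blast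
              then show "y \<in> V" using x fc T1(1) T(1) by simp
            qed
            ultimately show ?thesis by blast
          qed
        qed
        moreover have "W \<subseteq> V" using \<open>W \<subseteq> V1\<close> unfolding V1_def by blast
        ultimately show ?thesis using WZ(1,2)
          by (intro disjI2 exI[of _ W] exI[of _ Z']) simp
      qed
    qed
  qed
  obtain N where N: "\<And>Z. finite Z \<and> Z \<subseteq> sphere (0::complex) 1 \<and>
     (\<forall>z\<in>Z. \<forall>w\<in>Z. z \<noteq> w \<longrightarrow> \<epsilon> \<le> cmod (z - w)) \<Longrightarrow> card Z \<le> N"
    using sep_bound[OF e] by blast
  have "\<not> good V" using nc unfolding good_def by blast
  then obtain W Z where "finite Z" "card Z = Suc N" "Z \<subseteq> sphere 0 1"
      "\<forall>z\<in>Z. \<forall>w\<in>Z. z \<noteq> w \<longrightarrow> \<epsilon> \<le> cmod (z - w)"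
    using claim[of "Suc N", rule_format, OF conjI[OF V]] by (elim disjE exE conjE) blast+
  then show False using N[of Z] by simp
qed

lemma near:
  fixes x0 a b :: "'a::real_normed_vector"
  assumes r: "r > 0" and ed: "\<epsilon> = r / (2 * (norm x0 + r))"
    and b: "b \<in> ball x0 (r/2)" and ab: "norm (a - b) \<le> c * norm b"
    and c: "0 \<le> c" "c < \<epsilon>"
  shows "a \<in> ball x0 r"
proof -
  have nb: "norm b \<le> norm x0 + r/2"
    using b norm_triangle_ineq2[of b x0] by (simp add: dist_norm norm_minus_commute)
  have pos: "norm x0 + r > 0" using r by (smt (verit) norm_ge_zero)
  have eq: "\<epsilon> * (norm x0 + r) = r/2" unfolding ed using pos by (simp add: divide_simps)
  have "c * norm b \<le> c * (norm x0 + r/2)" using nb c(1) by (simp add: mult_left_mono)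
  also have "\<dots> < \<epsilon> * (norm x0 + r/2)"
    using c(2) pos r norm_ge_zero[of x0] by (intro mult_strict_right_mono) linarith+
  also have "\<dots> \<le> \<epsilon> * (norm x0 + r)"
    using r ed pos by (intro mult_left_mono) auto
  finally have "norm (a - b) < r/2" using ab eq by linarith
  moreover have "dist x0 b < r/2" using b by simp
  moreover have "dist x0 a \<le> dist x0 b + norm (a - b)"
    by (metis dist_norm dist_triangle norm_minus_commute)
  ultimately show ?thesis by simp
qed

theorem proposition3p6:
  fixes sm :: "complex \<Rightarrow> 'a::banach \<Rightarrow> 'a"
    and \<Gamma> :: "('a \<Rightarrow> 'a) set"
    and lam :: "('a \<Rightarrow> 'a) \<Rightarrow> complex"
  assumes "complex_banach_scalar sm"
    and "\<forall>T\<in>\<Gamma>. bounded_complex_operator sm T"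
    and "\<forall>T\<in>\<Gamma>. \<forall>S\<in>\<Gamma>. T \<circ> S \<in> \<Gamma>"
    and "\<forall>T\<in>\<Gamma>. cmod (lam T) = 1"
    and "\<forall>T\<in>\<Gamma>. \<forall>S\<in>\<Gamma>. lam (T \<circ> S) = lam T * lam S"
  shows "recurrent_set \<Gamma> \<longleftrightarrow> recurrent_set ((\<lambda>T. (\<lambda>x. sm (lam T) (T x))) ` \<Gamma>)"
proof -
  note cbs = assms(1)[unfolded complex_banach_scalar_def]
  have sm1: "sm 1 x = x" for x
    using cbs by (metis of_real_1 scaleR_one)
  have smsub: "sm a x - sm b x = sm (a - b) x" for a b x
  proof -
    have "sm a x = sm ((a - b) + b) x" by simp
    also have "\<dots> = sm (a - b) x + sm b x" using cbs by blast
    finally show ?thesis by simp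
  qed
  have smR: "sm (complex_of_real r) x = r *\<^sub>R x" for r x using cbs by blast
  have smn: "norm (sm a x) = cmod a * norm x" for a x using cbs by blast
  have smass: "sm a (sm b x) = sm (a * b) x" for a b x using cbs by blast
  have smcont: "continuous_on UNIV (sm c)" for c
  proof -
    have "bounded_linear (sm c)"
    proof (rule bounded_linear_intro[of _ "cmod c"])
      show "sm c (x + y) = sm c x + sm c y" for x y using cbs by blast
      show "sm c (r *\<^sub>R x) = r *\<^sub>R sm c x" for r x
      proof -
        have "sm c (r *\<^sub>R x) = sm c (sm (complex_of_real r) x)" by (simp only: smR)
        also have "\<dots> = sm (complex_of_real r * c) x" using smass by (simp add: mult.commute)
        also have "\<dots> = sm (complex_of_real r) (sm c x)" by (simp only: smass)
        also have "\<dots> = r *\<^sub>R sm c x" by (rule smR)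
        finally show ?thesis .
      qed
      show "norm (sm c x) \<le> norm x * cmod c" for x using smn by (simp add: mult.commute)
    qed
    then show ?thesis by (simp add: linear_continuous_on)
  qed
  have Tcont: "continuous_on UNIV T" if "T \<in> \<Gamma>" for T
    using assms(2) that unfolding bounded_complex_operator_def
    by (simp add: linear_continuous_on)
  define S where "S T = (\<lambda>x. sm (lam T) (T x))" for T
  have Scont: "continuous_on UNIV (S T)" if "T \<in> \<Gamma>" for T
  proof -
    have "continuous_on UNIV (sm (lam T) \<circ> T)"
      using Tcont[OF that] smcont continuous_on_compose continuous_on_subset by blast
    then show ?thesis unfolding S_def o_def .
  qed
  have Scomp: "S (T \<circ> T') = S T \<circ> S T'" if "T \<in> \<Gamma>" "T' \<in> \<Gamma>" for T T'
  proof
    fix x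
    have lin: "T (sm c y) = sm c (T y)" for c y
      using assms(2) that(1) unfolding bounded_complex_operator_def by blast
    show "S (T \<circ> T') x = (S T \<circ> S T') x"
      unfolding S_def using assms(5) that by (simp add: lin smass)
  qed
  have diff: "norm (S T x - T x) = cmod (lam T - 1) * norm (T x)" for T x
    unfolding S_def using smsub[of "lam T" "T x" 1] sm1 smn by simp
  have nS: "norm (S T x) = norm (T x)" if "T \<in> \<Gamma>" for T x
    unfolding S_def using smn assms(4) that by simp
  have ball_pick: "\<exists>x0 r. r > 0 \<and> ball x0 r \<subseteq> U" if "open U" "U \<noteq> {}" for U :: "'a set"
    using that by (meson ex_in_conv open_contains_ball)
  define eps where "eps x0 r = r / (2 * (norm x0 + r))" for x0 :: 'a and r :: real
  have epspos: "eps x0 r > 0" if "r > 0" for x0 r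
    unfolding eps_def using that by (smt (verit) divide_pos_pos norm_ge_zero)
  show ?thesis
  proof
    assume rec: "recurrent_set \<Gamma>"
    show "recurrent_set ((\<lambda>T. (\<lambda>x. sm (lam T) (T x))) ` \<Gamma>)"
      unfolding recurrent_set_def
    proof (intro allI impI)
      fix U :: "'a set" assume U: "open U \<and> U \<noteq> {}"
      then obtain x0 r where r: "r > 0" "ball x0 r \<subseteq> U" using ball_pick by blast
      have "\<exists>T\<in>\<Gamma>. \<exists>x\<in>ball x0 (r/2). T x \<in> ball x0 (r/2) \<and> cmod (lam T - 1) < eps x0 r"
        by (rule key[where f="\<lambda>T. T" and comp="(\<circ>)"])
          (use assms(3,4,5) rec Tcont epspos[OF r(1)] r(1) in auto)
      then obtain T x where Tx: "T \<in> \<Gamma>" "x \<in> ball x0 (r/2)" "T x \<in> ball x0 (r/2)"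
        "cmod (lam T - 1) < eps x0 r" by blast
      have "S T x \<in> ball x0 r"
        by (rule near[OF r(1) eps_def Tx(3) _ _ Tx(4)]) (simp_all add: diff)
      moreover have "x \<in> ball x0 r"
      proof -
        have "dist x0 x < r/2" using Tx(2) by simp
        then show ?thesis using zero_le_dist[of x0 x] unfolding mem_ball by linarith
      qed
      ultimately have xs: "x \<in> U" "S T x \<in> U" using r(2) by (auto simp del: mem_ball)
      have "S T x \<in> S T ` U \<inter> U" using xs by (intro IntI imageI)
      then have ne: "S T ` U \<inter> U \<noteq> {}" by auto
      have mem: "S T \<in> (\<lambda>T x. sm (lam T) (T x)) ` \<Gamma>" using Tx(1) unfolding S_def by (rule imageI)
      show "\<exists>T\<in>(\<lambda>T x. sm (lam T) (T x)) ` \<Gamma>. T ` U \<inter> U \<noteq> {}"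
      proof (rule bexI[of _ "S T"])
        show "S T ` U \<inter> U \<noteq> {}" by (rule ne)
        show "S T \<in> (\<lambda>T x. sm (lam T) (T x)) ` \<Gamma>" by (rule mem)
      qed
    qed
  next
    assume rec0: "recurrent_set ((\<lambda>T. (\<lambda>x. sm (lam T) (T x))) ` \<Gamma>)"
    have rec: "recurrent_set (S ` \<Gamma>)" using rec0 unfolding S_def[abs_def] .
    show "recurrent_set \<Gamma>"
      unfolding recurrent_set_def
    proof (intro allI impI)
      fix U :: "'a set" assume U: "open U \<and> U \<noteq> {}"
      then obtain x0 r where r: "r > 0" "ball x0 r \<subseteq> U" using ball_pick by blast
      have "\<exists>T\<in>\<Gamma>. \<exists>x\<in>ball x0 (r/2). S T x \<in> ball x0 (r/2) \<and> cmod (lam T - 1) < eps x0 r"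
        by (rule key[where f=S and comp="(\<circ>)"])
          (use assms(3,4,5) rec Scont Scomp epspos[OF r(1)] r(1) in auto)
      then obtain T x where Tx: "T \<in> \<Gamma>" "x \<in> ball x0 (r/2)" "S T x \<in> ball x0 (r/2)"
        "cmod (lam T - 1) < eps x0 r" by blast
      have "norm (T x - S T x) = cmod (lam T - 1) * norm (S T x)"
        using diff[of T x] nS[OF Tx(1)] by (simp add: norm_minus_commute)
      then have "T x \<in> ball x0 r"
        by (intro near[OF r(1) eps_def Tx(3) _ _ Tx(4)]) simp_all
      moreover have "x \<in> ball x0 r"
      proof -
        have "dist x0 x < r/2" using Tx(2) by simp
        then show ?thesis using zero_le_dist[of x0 x] unfolding mem_ball by linarith
      qed
      ultimately have xs: "x \<in> U" "T x \<in> U" using r(2) by (auto simp del: mem_ball)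
      have "T x \<in> T ` U \<inter> U" using xs by (intro IntI imageI)
      then have ne: "T ` U \<inter> U \<noteq> {}" by auto
      show "\<exists>T\<in>\<Gamma>. T ` U \<inter> U \<noteq> {}" using Tx(1) ne by (intro bexI[of _ T])
    qed
  qed
qed

end
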